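(* For all integers $i$ and $k$ such that $k+3\leq i\leq 2k+2$, we have $R_k^{\mathcal{SP}}(i,i)=3i-2k-4$, where $\mathcal{SP}$ is the class of split graphs.
   Context: All graphs are finite and simple. For a graph $G$ and a nonnegative integer $k$, a $k$-sparse $j$-set is a set of $j$ vertices of $G$ inducing a subgraph of maximum degree at most $k$; a $k$-dense $i$-set is a set of $i$ vertices of $G$ that is $k$-sparse in the complement of $G$. For a graph class $\mathcal{G}$, $R_k^{\mathcal{G}}(i,j)$ is the smallest natural number $n$ such that every graph on $n$ vertices in $\mathcal{G}$ has either a $k$-dense $i$-set or a $k$-sparse $j$-set. A split graph is a graph whose vertex set can be partitioned into a clique and an independent set. *)

theory Defs
  imports Main
begin

text \<open>A finite simple graph: finite vertex set V (of naturals) and an edge relation E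
  that is symmetric and irreflexive on V. Only the restriction of E to V matters.\<close>
definition simple_graph :: "nat set \<Rightarrow> (nat \<Rightarrow> nat \<Rightarrow> bool) \<Rightarrow> bool" where
  "simple_graph V E \<longleftrightarrow> finite V \<and> (\<forall>u\<in>V. \<forall>v\<in>V. E u v \<longleftrightarrow> E v u) \<and> (\<forall>v\<in>V. \<not> E v v)"

definition max_deg_le :: "(nat \<Rightarrow> nat \<Rightarrow> bool) \<Rightarrow> nat set \<Rightarrow> nat \<Rightarrow> bool" where
  "max_deg_le E S k \<longleftrightarrow> (\<forall>v\<in>S. card {u\<in>S. E v u} \<le> k)"

definition compl_edges :: "(nat \<Rightarrow> nat \<Rightarrow> bool) \<Rightarrow> nat \<Rightarrow> nat \<Rightarrow> bool" where
  "compl_edges E u v \<longleftrightarrow> u \<noteq> v \<and> \<not> E u v"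

definition k_sparse_set :: "nat set \<Rightarrow> (nat \<Rightarrow> nat \<Rightarrow> bool) \<Rightarrow> nat \<Rightarrow> nat \<Rightarrow> nat set \<Rightarrow> bool" where
  "k_sparse_set V E k j S \<longleftrightarrow> S \<subseteq> V \<and> card S = j \<and> max_deg_le E S k"

definition k_dense_set :: "nat set \<Rightarrow> (nat \<Rightarrow> nat \<Rightarrow> bool) \<Rightarrow> nat \<Rightarrow> nat \<Rightarrow> nat set \<Rightarrow> bool" where
  "k_dense_set V E k i S \<longleftrightarrow> k_sparse_set V (compl_edges E) k i S"

definition split_graph :: "nat set \<Rightarrow> (nat \<Rightarrow> nat \<Rightarrow> bool) \<Rightarrow> bool" where
  "split_graph V E \<longleftrightarrow> simple_graph V E \<and>
     (\<exists>C I. C \<union> I = V \<and> C \<inter> I = {} \<and>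
        (\<forall>u\<in>C. \<forall>v\<in>C. u \<noteq> v \<longrightarrow> E u v) \<and>
        (\<forall>u\<in>I. \<forall>v\<in>I. \<not> E u v))"

definition ramsey_class :: "(nat set \<Rightarrow> (nat \<Rightarrow> nat \<Rightarrow> bool) \<Rightarrow> bool) \<Rightarrow> nat \<Rightarrow> nat \<Rightarrow> nat \<Rightarrow> nat" where
  "ramsey_class P k i j = (LEAST n. \<forall>V E. simple_graph V E \<and> P V E \<and> card V = n \<longrightarrow>
      (\<exists>S. k_dense_set V E k i S) \<or> (\<exists>S. k_sparse_set V E k j S))"

end

theory Submission
  imports Defs
begin

lemma card_minus_le:
  assumes "finite S" "finite Z"
  shows "card S \<le> card (S - Z - {x}) + card Z + 1"
proof -
  have "S \<subseteq> (S - Z - {x}) \<union> (Z \<union> {x})" by auto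
  then have "card S \<le> card ((S - Z - {x}) \<union> (Z \<union> {x}))"
    using assms by (intro card_mono) auto
  also have "\<dots> \<le> card (S - Z - {x}) + card (Z \<union> {x})" by (rule card_Un_le)
  also have "card (Z \<union> {x}) \<le> card Z + 1" using assms
    by (simp add: card_insert_if)
  finally show ?thesis by simp
qed

lemma card_split_filter:
  assumes "finite A"
  shows "card {y\<in>A. P y} + card {y\<in>A. \<not> P y} = card A"
proof -
  have "{y\<in>A. P y} \<union> {y\<in>A. \<not> P y} = A" by auto
  moreover have "{y\<in>A. P y} \<inter> {y\<in>A. \<not> P y} = {}" by auto
  ultimately show ?thesis using assms card_Un_disjoint
    by (metis (no_types, lifting) finite_Un)
qed

lemma double_count:
  assumes "finite A" "finite B"
  shows "(\<Sum>x\<in>A. card {y\<in>B. P x y}) = (\<Sum>y\<in>B. card {x\<in>A. P x y})"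
proof -
  have 1: "\<And>x. card {y\<in>B. P x y} = (\<Sum>y\<in>B. if P x y then 1 else 0)"
    using assms by (simp add: sum.inter_filter[symmetric])
  have 2: "\<And>y. card {x\<in>A. P x y} = (\<Sum>x\<in>A. if P x y then 1 else 0)"
    using assms by (simp add: sum.inter_filter[symmetric])
  show ?thesis unfolding 1 2 by (rule sum.swap)
qed

lemma card_le_diff:
  assumes "finite S" "finite Z"
  shows "card S \<le> card (S - Z) + card Z"
proof -
  have "S \<subseteq> (S - Z) \<union> Z" by auto
  then have "card S \<le> card ((S - Z) \<union> Z)" using assms by (intro card_mono) auto
  also have "\<dots> \<le> card (S - Z) + card Z" by (rule card_Un_le)
  finally show ?thesis .
qed
lemma upper:
  fixes V :: "nat set" and E :: "nat \<Rightarrow> nat \<Rightarrow> bool" and k i s :: nat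
  assumes ik: "i = k + 3 + s" and sk: "s + 1 \<le> k"
    and spl: "split_graph V E" and cV: "card V = k + 5 + 3 * s"
  shows "(\<exists>S. k_dense_set V E k i S) \<or> (\<exists>S. k_sparse_set V E k i S)"
proof (rule ccontr)
  assume "\<not> ?thesis"
  hence nd: "\<And>S. \<not> k_dense_set V E k i S" and ns: "\<And>S. \<not> k_sparse_set V E k i S" by auto
  from spl obtain C I where sg: "simple_graph V E" and CI: "C \<union> I = V" "C \<inter> I = {}"
    and Ccl: "\<forall>u\<in>C. \<forall>v\<in>C. u \<noteq> v \<longrightarrow> E u v" and Iind: "\<forall>u\<in>I. \<forall>v\<in>I. \<not> E u v"
    unfolding split_graph_def by blast
  have fV: "finite V" using sg simple_graph_def by auto
  have sym: "\<And>u v. u\<in>V \<Longrightarrow> v\<in>V \<Longrightarrow> E u v = E v u" using sg unfolding simple_graph_def by blast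
  have irr: "\<And>v. v\<in>V \<Longrightarrow> \<not> E v v" using sg unfolding simple_graph_def by blast
  have fC: "finite C" and fI: "finite I" using fV CI by auto
  define c a where "c = card C" and "a = card I"
  have ca: "c + a = k + 5 + 3 * s" using card_Un_disjoint[OF fC fI CI(2)] CI(1) cV c_def a_def by simp
  have cle: "c \<le> k + 2 + s"
  proof (rule ccontr)
    assume "\<not> c \<le> k + 2 + s"
    then have "i \<le> card C" using ik c_def by simp
    then obtain S where S: "S \<subseteq> C" "card S = i" using obtain_subset_with_card_n by metis
    have "k_dense_set V E k i S"
      unfolding k_dense_set_def k_sparse_set_def max_deg_le_def
    proof (intro conjI ballI)
      show "S \<subseteq> V" using S CI by auto
      show "card S = i" using S by simp
      fix v assume "v \<in> S"
      then have "{u \<in> S. compl_edges E v u} = {}" using S Ccl unfolding compl_edges_def by auto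
      then show "card {u \<in> S. compl_edges E v u} \<le> k" by (metis card.empty zero_le)
    qed
    with nd show False by blast
  qed
  have ale: "a \<le> k + 2 + s"
  proof (rule ccontr)
    assume "\<not> a \<le> k + 2 + s"
    then have "i \<le> card I" using ik a_def by simp
    then obtain S where S: "S \<subseteq> I" "card S = i" using obtain_subset_with_card_n by metis
    have "k_sparse_set V E k i S"
      unfolding k_sparse_set_def max_deg_le_def
    proof (intro conjI ballI)
      show "S \<subseteq> V" using S CI by auto
      show "card S = i" using S by simp
      fix v assume "v \<in> S"
      then have "{u \<in> S. E v u} = {}" using S Iind by auto
      then show "card {u \<in> S. E v u} \<le> k" by (metis card.empty zero_le)
    qed
    with ns show False by blast
  qed
  define A where "A = {x\<in>C. card {y\<in>I. \<not> E x y} \<le> s + 1}"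
  have Abig: "2 * s + 3 \<le> card A"
  proof (rule ccontr)
    assume "\<not> ?thesis"
    define D where "D = C - A"
    have AC: "A \<subseteq> C" unfolding A_def by auto
    have "card D = c - card A" unfolding D_def c_def using AC fC by (simp add: card_Diff_subset finite_subset)
    then have "i - a \<le> card D" using ca ik \<open>\<not> 2 * s + 3 \<le> card A\<close> by linarith
    then obtain T where T: "T \<subseteq> D" "card T = i - a" using obtain_subset_with_card_n by metis
    have fT: "finite T" using T D_def fC finite_subset by blast
    have TI: "T \<inter> I = {}" using T D_def CI by auto
    define S where "S = T \<union> I"
    have "k_sparse_set V E k i S"
      unfolding k_sparse_set_def max_deg_le_def
    proof (intro conjI ballI)
      show "S \<subseteq> V" using T CI S_def D_def by auto
      show "card S = i" unfolding S_def using card_Un_disjoint[OF fT fI TI] T a_def ale ik by simp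
      fix v assume vS: "v \<in> S"
      show "card {u \<in> S. E v u} \<le> k"
      proof (cases "v \<in> T")
        case True
        then have vD: "v \<in> C" "\<not> card {y\<in>I. \<not> E v y} \<le> s + 1" using T D_def A_def by auto
        have sub: "{u \<in> S. E v u} \<subseteq> (T - {v}) \<union> {y\<in>I. E v y}"
          using irr vD CI unfolding S_def by auto
        have "card {u \<in> S. E v u} \<le> card ((T - {v}) \<union> {y\<in>I. E v y})"
          using sub fT fI by (intro card_mono) auto
        also have "\<dots> \<le> card (T - {v}) + card {y\<in>I. E v y}" by (rule card_Un_le)
        also have "card (T - {v}) = i - a - 1" using T True fT by simp
        also have "card {y\<in>I. E v y} \<le> a - (s + 2)"
          using card_split_filter[OF fI, of "E v"] vD a_def by linarith
        finally show ?thesis using ik ca cle ale by linarith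
      next
        case False
        then have vI: "v \<in> I" using vS S_def by auto
        have "{u \<in> S. E v u} \<subseteq> T" using vI Iind S_def by auto
        then have "card {u \<in> S. E v u} \<le> card T" using fT by (intro card_mono) auto
        then show ?thesis using T ik ca cle ale by linarith
      qed
    qed
    with ns show False by blast
  qed
  define B where "B = {y\<in>I. card {x\<in>C. E y x} \<le> s + 1}"
  have Bbig: "2 * s + 3 \<le> card B"
  proof (rule ccontr)
    assume "\<not> ?thesis"
    define D where "D = I - B"
    have BI: "B \<subseteq> I" unfolding B_def by auto
    have "card D = a - card B" unfolding D_def a_def using BI fI by (simp add: card_Diff_subset finite_subset)
    then have "i - c \<le> card D" using ca ik \<open>\<not> 2 * s + 3 \<le> card B\<close> by linarith
    then obtain J where J: "J \<subseteq> D" "card J = i - c" using obtain_subset_with_card_n by metis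
    have fJ: "finite J" using J D_def fI finite_subset by blast
    have JC: "C \<inter> J = {}" using J D_def CI by auto
    define S where "S = C \<union> J"
    have "k_dense_set V E k i S"
      unfolding k_dense_set_def k_sparse_set_def max_deg_le_def
    proof (intro conjI ballI)
      show "S \<subseteq> V" using J CI S_def D_def by auto
      show "card S = i" unfolding S_def using card_Un_disjoint[OF fC fJ JC] J c_def cle ik by simp
      fix v assume vS: "v \<in> S"
      show "card {u \<in> S. compl_edges E v u} \<le> k"
      proof (cases "v \<in> J")
        case True
        then have vD: "v \<in> I" "\<not> card {x\<in>C. E v x} \<le> s + 1" using J D_def B_def by auto
        have sub: "{u \<in> S. compl_edges E v u} \<subseteq> (J - {v}) \<union> {x\<in>C. \<not> E v x}"
          using vD unfolding S_def compl_edges_def by auto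
        have "card {u \<in> S. compl_edges E v u} \<le> card ((J - {v}) \<union> {x\<in>C. \<not> E v x})"
          using sub fJ fC by (intro card_mono) auto
        also have "\<dots> \<le> card (J - {v}) + card {x\<in>C. \<not> E v x}" by (rule card_Un_le)
        also have "card (J - {v}) = i - c - 1" using J True fJ by simp
        also have "card {x\<in>C. \<not> E v x} \<le> c - (s + 2)"
          using card_split_filter[OF fC, of "E v"] vD c_def by linarith
        finally show ?thesis using ik ca cle ale by linarith
      next
        case False
        then have vC: "v \<in> C" using vS S_def by auto
        have "{u \<in> S. compl_edges E v u} \<subseteq> J" using vC Ccl S_def unfolding compl_edges_def by auto
        then have "card {u \<in> S. compl_edges E v u} \<le> card J" using fJ by (intro card_mono) auto
        then show ?thesis using J ik ca cle ale by linarith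
      qed
    qed
    with nd show False by blast
  qed
  obtain A' where A': "A' \<subseteq> A" "card A' = 2 * s + 3" using Abig obtain_subset_with_card_n by metis
  obtain B' where B': "B' \<subseteq> B" "card B' = 2 * s + 3" using Bbig obtain_subset_with_card_n by metis
  have A'C: "A' \<subseteq> C" using A' unfolding A_def by auto
  have B'I: "B' \<subseteq> I" using B' unfolding B_def by auto
  have fA': "finite A'" using A'C fC by (rule finite_subset)
  have fB': "finite B'" using B'I fI by (rule finite_subset)
  have lo: "\<And>x. x \<in> A' \<Longrightarrow> s + 2 \<le> card {y\<in>B'. E x y}"
  proof -
    fix x assume xA: "x \<in> A'"
    then have xc: "card {y\<in>I. \<not> E x y} \<le> s + 1" using A' A_def by auto
    have "card B' \<le> card (B' - {y\<in>I. \<not> E x y}) + card {y\<in>I. \<not> E x y}"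
      using fB' fI by (intro card_le_diff) auto
    moreover have "B' - {y\<in>I. \<not> E x y} \<subseteq> {y\<in>B'. E x y}" using B' B_def by auto
    then have "card (B' - {y\<in>I. \<not> E x y}) \<le> card {y\<in>B'. E x y}" using fB' by (intro card_mono) auto
    ultimately show "s + 2 \<le> card {y\<in>B'. E x y}" using xc B' by linarith
  qed
  have hi: "\<And>y. y \<in> B' \<Longrightarrow> card {x\<in>A'. E x y} \<le> s + 1"
  proof -
    fix y assume yB: "y \<in> B'"
    then have yc: "card {x\<in>C. E y x} \<le> s + 1" and yI: "y \<in> I" using B' B_def by auto
    have "{x\<in>A'. E x y} \<subseteq> {x\<in>C. E y x}"
    proof
      fix x assume "x \<in> {x\<in>A'. E x y}"
      then have "x \<in> C" "E x y" using A'C by auto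
      moreover have "x \<in> V" "y \<in> V" using \<open>x \<in> C\<close> yI CI by auto
      ultimately show "x \<in> {x\<in>C. E y x}" using sym by blast
    qed
    then have "card {x\<in>A'. E x y} \<le> card {x\<in>C. E y x}" using fC by (intro card_mono) auto
    then show "card {x\<in>A'. E x y} \<le> s + 1" using yc by linarith
  qed
  have "(2 * s + 3) * (s + 2) \<le> (\<Sum>x\<in>A'. card {y\<in>B'. E x y})"
    using sum_bounded_below[of A' "s + 2" "\<lambda>x. card {y\<in>B'. E x y}"] lo A' by simp
  also have "\<dots> = (\<Sum>y\<in>B'. card {x\<in>A'. E x y})" by (rule double_count[OF fA' fB'])
  also have "\<dots> \<le> (2 * s + 3) * (s + 1)"
    using sum_bounded_above[of B' "\<lambda>y. card {x\<in>A'. E x y}" "s + 1"] hi B' by simp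
  finally show False by simp
qed
definition cE :: "nat set \<Rightarrow> nat set \<Rightarrow> nat set \<Rightarrow> nat set \<Rightarrow> nat set \<Rightarrow> nat \<Rightarrow> nat \<Rightarrow> bool" where
  "cE C1 C2 I0 I1 I2 u v \<longleftrightarrow> (u \<in> C1 \<union> C2 \<and> v \<in> C1 \<union> C2 \<and> u \<noteq> v) \<or> (u \<in> C1 \<and> v \<in> I0 \<union> I1)
     \<or> (v \<in> C1 \<and> u \<in> I0 \<union> I1) \<or> (u \<in> C2 \<and> v \<in> I0 \<union> I2) \<or> (v \<in> C2 \<and> u \<in> I0 \<union> I2)"

lemma constr:
  fixes C1 C2 I0 I1 I2 V :: "nat set" and k s :: nat
  assumes fin: "finite C1" "finite C2" "finite I0" "finite I1" "finite I2"
    and disj: "C1 \<inter> C2 = {}" "C1 \<inter> I0 = {}" "C1 \<inter> I1 = {}" "C1 \<inter> I2 = {}"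
      "C2 \<inter> I0 = {}" "C2 \<inter> I1 = {}" "C2 \<inter> I2 = {}" "I0 \<inter> I1 = {}" "I0 \<inter> I2 = {}" "I1 \<inter> I2 = {}"
    and cards: "card C1 = s + 1" "card C2 = s + 1" "card I1 = s + 1" "card I2 = s + 1" "card I0 = k - s"
    and sk: "s + 1 \<le> k"
    and VV: "V \<subseteq> C1 \<union> C2 \<union> I0 \<union> I1 \<union> I2"
  shows "simple_graph V (cE C1 C2 I0 I1 I2) \<and> split_graph V (cE C1 C2 I0 I1 I2)
    \<and> (\<forall>S. \<not> k_dense_set V (cE C1 C2 I0 I1 I2) k (k + 3 + s) S)
    \<and> (\<forall>S. \<not> k_sparse_set V (cE C1 C2 I0 I1 I2) k (k + 3 + s) S)"
proof -
  let ?E = "cE C1 C2 I0 I1 I2"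
  have fV: "finite V" using VV fin finite_subset by blast
  have sg: "simple_graph V ?E" unfolding simple_graph_def cE_def using fV disj by blast
  have sp1: "V \<inter> (C1 \<union> C2) \<union> V \<inter> (I0 \<union> I1 \<union> I2) = V" using VV by auto
  have sp2: "V \<inter> (C1 \<union> C2) \<inter> (V \<inter> (I0 \<union> I1 \<union> I2)) = {}" using disj by auto
  have sp3: "\<forall>u\<in>V \<inter> (C1 \<union> C2). \<forall>v\<in>V \<inter> (C1 \<union> C2). u \<noteq> v \<longrightarrow> ?E u v" unfolding cE_def by blast
  have sp4: "\<forall>u\<in>V \<inter> (I0 \<union> I1 \<union> I2). \<forall>v\<in>V \<inter> (I0 \<union> I1 \<union> I2). \<not> ?E u v" unfolding cE_def using disj by blast
  have spl: "split_graph V ?E" unfolding split_graph_def using sg sp1 sp2 sp3 sp4 by blast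
  have cI: "card (I0 \<union> I1 \<union> I2) = k + s + 2"
    using fin disj cards sk by (simp add: card_Un_disjoint Int_Un_distrib2)
  have cC0: "card (C1 \<union> C2 \<union> I0) = k + s + 2"
    using fin disj cards sk by (simp add: card_Un_disjoint Int_Un_distrib2)
  have nsp: "\<not> k_sparse_set V ?E k (k + 3 + s) S" for S
  proof
    assume "k_sparse_set V ?E k (k + 3 + s) S"
    then have S: "S \<subseteq> V" "card S = k + 3 + s" and md: "\<And>v. v \<in> S \<Longrightarrow> card {u\<in>S. ?E v u} \<le> k"
      unfolding k_sparse_set_def max_deg_le_def by auto
    have fS: "finite S" using S fV finite_subset by blast
    have "\<not> S \<subseteq> I0 \<union> I1 \<union> I2"
    proof
      assume "S \<subseteq> I0 \<union> I1 \<union> I2"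
      then have "card S \<le> card (I0 \<union> I1 \<union> I2)" using fin by (intro card_mono) auto
      then have "card S \<le> k + s + 2" using cI by simp
      then show False using S by simp
    qed
    then obtain x where xS: "x \<in> S" and xC: "x \<in> C1 \<or> x \<in> C2" using S VV by blast
    show False
    proof (cases "x \<in> C1")
      case True
      have "S - I2 - {x} \<subseteq> {u\<in>S. ?E x u}" using True S VV unfolding cE_def by blast
      then have "card (S - I2 - {x}) \<le> card {u\<in>S. ?E x u}" using fS by (intro card_mono) auto
      moreover have "card S \<le> card (S - I2 - {x}) + card I2 + 1" using fS fin by (intro card_minus_le) auto
      ultimately show False using md[OF xS] S cards by linarith
    next
      case False
      then have x2: "x \<in> C2" using xC by blast
      have "S - I1 - {x} \<subseteq> {u\<in>S. ?E x u}" using x2 S VV unfolding cE_def by blast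
      then have "card (S - I1 - {x}) \<le> card {u\<in>S. ?E x u}" using fS by (intro card_mono) auto
      moreover have "card S \<le> card (S - I1 - {x}) + card I1 + 1" using fS fin by (intro card_minus_le) auto
      ultimately show False using md[OF xS] S cards by linarith
    qed
  qed
  have nde: "\<not> k_dense_set V ?E k (k + 3 + s) S" for S
  proof
    assume "k_dense_set V ?E k (k + 3 + s) S"
    then have S: "S \<subseteq> V" "card S = k + 3 + s" and md: "\<And>v. v \<in> S \<Longrightarrow> card {u\<in>S. compl_edges ?E v u} \<le> k"
      unfolding k_dense_set_def k_sparse_set_def max_deg_le_def by auto
    have fS: "finite S" using S fV finite_subset by blast
    have "\<not> S \<subseteq> C1 \<union> C2 \<union> I0"
    proof
      assume "S \<subseteq> C1 \<union> C2 \<union> I0"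
      then have "card S \<le> card (C1 \<union> C2 \<union> I0)" using fin by (intro card_mono) auto
      then have "card S \<le> k + s + 2" using cC0 by simp
      then show False using S by simp
    qed
    then obtain y where yS: "y \<in> S" and yI: "y \<in> I1 \<or> y \<in> I2" using S VV by blast
    show False
    proof (cases "y \<in> I1")
      case True
      have yn: "y \<notin> C1" "y \<notin> C2" "y \<notin> I0" "y \<notin> I2" using True disj by blast+
      have "S - C1 - {y} \<subseteq> {u\<in>S. compl_edges ?E y u}"
      proof
        fix u assume "u \<in> S - C1 - {y}"
        then have "u \<in> S" "u \<notin> C1" "u \<noteq> y" by auto
        then show "u \<in> {u\<in>S. compl_edges ?E y u}" using yn \<open>y \<in> I1\<close> unfolding cE_def compl_edges_def by auto
      qed
      then have "card (S - C1 - {y}) \<le> card {u\<in>S. compl_edges ?E y u}" using fS by (intro card_mono) auto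
      moreover have "card S \<le> card (S - C1 - {y}) + card C1 + 1" using fS fin by (intro card_minus_le) auto
      ultimately show False using md[OF yS] S cards by linarith
    next
      case False
      then have y2: "y \<in> I2" using yI by blast
      have yn: "y \<notin> C1" "y \<notin> C2" "y \<notin> I0" "y \<notin> I1" using y2 disj by blast+
      have "S - C2 - {y} \<subseteq> {u\<in>S. compl_edges ?E y u}"
      proof
        fix u assume "u \<in> S - C2 - {y}"
        then have "u \<in> S" "u \<notin> C2" "u \<noteq> y" by auto
        then show "u \<in> {u\<in>S. compl_edges ?E y u}" using yn \<open>y \<in> I2\<close> unfolding cE_def compl_edges_def by auto
      qed
      then have "card (S - C2 - {y}) \<le> card {u\<in>S. compl_edges ?E y u}" using fS by (intro card_mono) auto
      moreover have "card S \<le> card (S - C2 - {y}) + card C2 + 1" using fS fin by (intro card_minus_le) auto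
      ultimately show False using md[OF yS] S cards by linarith
    qed
  qed
  show ?thesis using sg spl nsp nde by blast
qed
lemma lower:
  fixes k s n :: nat
  assumes sk: "s + 1 \<le> k" and n: "n \<le> k + 4 + 3 * s"
  shows "\<exists>V E. simple_graph V E \<and> split_graph V E \<and> card V = n
    \<and> \<not> ((\<exists>S. k_dense_set V E k (k + 3 + s) S) \<or> (\<exists>S. k_sparse_set V E k (k + 3 + s) S))"
proof -
  define m where "m = s + 1"
  define C1 where "C1 = {0..<m}"
  define C2 where "C2 = {m..<2*m}"
  define I1 where "I1 = {2*m..<3*m}"
  define I2 where "I2 = {3*m..<4*m}"
  define I0 where "I0 = {4*m..<4*m + (k - s)}"
  define V0 where "V0 = {0..<4*m + (k - s)}"
  have cV0: "card V0 = k + 4 + 3 * s" unfolding V0_def m_def using sk by simp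
  obtain V where V: "V \<subseteq> V0" "card V = n" using n cV0 obtain_subset_with_card_n by metis
  have "V0 \<subseteq> C1 \<union> C2 \<union> I0 \<union> I1 \<union> I2"
    unfolding V0_def C1_def C2_def I0_def I1_def I2_def by auto
  then have VV: "V \<subseteq> C1 \<union> C2 \<union> I0 \<union> I1 \<union> I2" using V(1) by blast
  have "simple_graph V (cE C1 C2 I0 I1 I2) \<and> split_graph V (cE C1 C2 I0 I1 I2)
    \<and> (\<forall>S. \<not> k_dense_set V (cE C1 C2 I0 I1 I2) k (k + 3 + s) S)
    \<and> (\<forall>S. \<not> k_sparse_set V (cE C1 C2 I0 I1 I2) k (k + 3 + s) S)"
    by (rule constr[OF _ _ _ _ _ _ _ _ _ _ _ _ _ _ _ _ _ _ _ _ sk VV]) (auto simp: C1_def C2_def I0_def I1_def I2_def m_def)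
  then show ?thesis using V by blast
qed

theorem theorem6p3:
  fixes i k :: nat
  assumes "k + 3 \<le> i" and "i \<le> 2 * k + 2"
  shows "ramsey_class split_graph k i i = 3 * i - 2 * k - 4"
proof -
  define s where "s = i - k - 3"
  have ik: "i = k + 3 + s" and sk: "s + 1 \<le> k" using assms s_def by auto
  have N: "3 * i - 2 * k - 4 = k + 5 + 3 * s" using ik by simp
  show ?thesis unfolding ramsey_class_def N
  proof (rule Least_equality)
    show "\<forall>V E. simple_graph V E \<and> split_graph V E \<and> card V = k + 5 + 3 * s \<longrightarrow>
      (\<exists>S. k_dense_set V E k i S) \<or> (\<exists>S. k_sparse_set V E k i S)"
      using upper[OF ik sk] by blast
  next
    fix y assume P: "\<forall>V E. simple_graph V E \<and> split_graph V E \<and> card V = y \<longrightarrow>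
      (\<exists>S. k_dense_set V E k i S) \<or> (\<exists>S. k_sparse_set V E k i S)"
    show "k + 5 + 3 * s \<le> y"
    proof (rule ccontr)
      assume "\<not> k + 5 + 3 * s \<le> y"
      then have "y \<le> k + 4 + 3 * s" by simp
      from lower[OF sk this] obtain V E where "simple_graph V E" "split_graph V E" "card V = y"
        "\<not> ((\<exists>S. k_dense_set V E k (k + 3 + s) S) \<or> (\<exists>S. k_sparse_set V E k (k + 3 + s) S))"
        by blast
      with P ik show False by blast
    qed
  qed
qed

end
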